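(* Let $G=(V,E)$ be a digraph and let $(X,T)$ be a tree decomposition of its underlying undirected graph, with bags $X_1,\dots,X_n$. For each bag $X_i$ let $V_i=X_i\cup\{u\in V:(u,v)\in E\text{ for some }v\in X_i\}$ be the set of vertices of $X_i$ together with all their in-neighbors. Then for every $v\in V$, the set $X^v=\{X_i: v\in V_i\}$ of bags forms a connected subtree of $T$.
   Context: A tree decomposition of an undirected graph $H$ is a pair $(X,T)$ where $X=\{X_1,\dots,X_n\}$ is a collection of vertex subsets and $T$ is a tree on $X$ such that: every vertex lies in some $X_i$; for every edge $\{u,v\}$ some $X_i$ contains both $u$ and $v$; and for every vertex $v$ the bags containing $v$ form a connected subtree of $T$. The underlying graph of a digraph is obtained by treating arcs as undirected edges. *)

theory Defs
  imports Main
begin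

definition digraph :: "'a set \<Rightarrow> ('a \<times> 'a) set \<Rightarrow> bool" where
  "digraph V E \<longleftrightarrow> E \<subseteq> V \<times> V"

definition underlying_edges :: "('a \<times> 'a) set \<Rightarrow> 'a set set" where
  "underlying_edges E = {{u, v} | u v. (u, v) \<in> E}"

definition connected_in :: "'b set set \<Rightarrow> 'b set \<Rightarrow> bool" where
  "connected_in T S \<longleftrightarrow> S \<noteq> {} \<and>
     (\<forall>i\<in>S. \<forall>j\<in>S. (i, j) \<in> {(x, y). {x, y} \<in> T \<and> x \<in> S \<and> y \<in> S}\<^sup>*)"

text \<open>A (finite) tree on node set I with edge set T: connected, and acyclic
  (every edge is a bridge, i.e. deleting it disconnects the graph).\<close>
definition is_tree :: "'b set \<Rightarrow> 'b set set \<Rightarrow> bool" where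
  "is_tree I T \<longleftrightarrow> finite I \<and>
     T \<subseteq> {{i, j} | i j. i \<in> I \<and> j \<in> I \<and> i \<noteq> j} \<and>
     connected_in T I \<and>
     (\<forall>e\<in>T. \<not> connected_in (T - {e}) I)"

definition tree_decomposition ::
  "'a set \<Rightarrow> 'a set set \<Rightarrow> 'b set \<Rightarrow> ('b \<Rightarrow> 'a set) \<Rightarrow> 'b set set \<Rightarrow> bool" where
  "tree_decomposition V F I X T \<longleftrightarrow>
     is_tree I T \<and>
     (\<forall>i\<in>I. X i \<subseteq> V) \<and>
     (\<forall>v\<in>V. \<exists>i\<in>I. v \<in> X i) \<and>
     (\<forall>e\<in>F. \<exists>i\<in>I. e \<subseteq> X i) \<and>
     (\<forall>v\<in>V. connected_in T {i \<in> I. v \<in> X i})"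

definition bag_with_in_nbrs :: "'a set \<Rightarrow> ('a \<times> 'a) set \<Rightarrow> 'a set \<Rightarrow> 'a set" where
  "bag_with_in_nbrs V E B = B \<union> {u \<in> V. \<exists>v\<in>B. (u, v) \<in> E}"

end

theory Submission
  imports Defs
begin

lemma conn_mono:
  assumes "(i,j) \<in> {(x,y). {x,y}\<in>T \<and> x\<in>S \<and> y\<in>S}\<^sup>*" "S \<subseteq> S'"
  shows "(i,j) \<in> {(x,y). {x,y}\<in>T \<and> x\<in>S' \<and> y\<in>S'}\<^sup>*"
proof -
  have "{(x,y). {x,y}\<in>T \<and> x\<in>S \<and> y\<in>S} \<subseteq> {(x,y). {x,y}\<in>T \<and> x\<in>S' \<and> y\<in>S'}"
    using assms(2) by auto
  then show ?thesis using assms(1) rtrancl_mono by blast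
qed

theorem lemmaA1:
  fixes V :: "'a set" and E :: "('a \<times> 'a) set"
    and I :: "'b set" and X :: "'b \<Rightarrow> 'a set" and T :: "'b set set"
  assumes "digraph V E"
    and "tree_decomposition V (underlying_edges E) I X T"
  shows "\<forall>v\<in>V. connected_in T {i \<in> I. v \<in> bag_with_in_nbrs V E (X i)}"
proof
  fix v assume v: "v \<in> V"
  define A where "A w = {i \<in> I. w \<in> X i}" for w
  define W where "W = {v} \<union> {w. (v,w) \<in> E}"
  define S where "S = {i \<in> I. v \<in> bag_with_in_nbrs V E (X i)}"
  have EV: "E \<subseteq> V \<times> V" using assms(1) unfolding digraph_def .
  have td: "\<forall>i\<in>I. X i \<subseteq> V" "\<forall>e\<in>underlying_edges E. \<exists>i\<in>I. e \<subseteq> X i"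
     "\<forall>v\<in>V. connected_in T {i \<in> I. v \<in> X i}"
    using assms(2) unfolding tree_decomposition_def by auto
  have WV: "W \<subseteq> V" using v EV unfolding W_def by auto
  have conA: "connected_in T (A w)" if "w \<in> W" for w
    using td(3) WV that unfolding A_def by auto
  have meet: "\<exists>k. k \<in> A v \<and> k \<in> A w" if "w \<in> W" for w
  proof (cases "w = v")
    case True
    then show ?thesis using conA[OF that] unfolding connected_in_def by auto
  next
    case False
    then have "(v,w) \<in> E" using that unfolding W_def by auto
    then have "{v,w} \<in> underlying_edges E" unfolding underlying_edges_def by auto
    then obtain k where "k \<in> I" "{v,w} \<subseteq> X k" using td(2) by blast
    then show ?thesis unfolding A_def by auto
  qed
  have Seq: "S = (\<Union>w\<in>W. A w)"
    using v td(1) unfolding S_def A_def W_def bag_with_in_nbrs_def by auto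
  have AS: "A w \<subseteq> S" if "w \<in> W" for w using Seq that by auto
  let ?R = "\<lambda>S. {(x,y). {x,y}\<in>T \<and> x\<in>S \<and> y\<in>S}"
  have path: "(i,j) \<in> (?R S)\<^sup>*" if h: "i \<in> A a" "j \<in> A b" "a \<in> W" "b \<in> W" for i j a b
  proof -
    obtain k where k: "k \<in> A v" "k \<in> A a" using meet[OF h(3)] by blast
    obtain k' where k': "k' \<in> A v" "k' \<in> A b" using meet[OF h(4)] by blast
    have vW: "v \<in> W" unfolding W_def by auto
    have 1: "(i,k) \<in> (?R S)\<^sup>*"
      using conA[OF h(3)] h(1) k(2) unfolding connected_in_def
      by (intro conn_mono[OF _ AS[OF h(3)]]) blast
    have 2: "(k,k') \<in> (?R S)\<^sup>*"
      using conA[OF vW] k(1) k'(1) unfolding connected_in_def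
      by (intro conn_mono[OF _ AS[OF vW]]) blast
    have 3: "(k',j) \<in> (?R S)\<^sup>*"
      using conA[OF h(4)] h(2) k'(2) unfolding connected_in_def
      by (intro conn_mono[OF _ AS[OF h(4)]]) blast
    show ?thesis using 1 2 3 by (meson rtrancl_trans)
  qed
  have ne: "S \<noteq> {}" using meet[of v] AS[of v] unfolding W_def by auto
  show "connected_in T S"
    unfolding connected_in_def using ne path Seq by blast
qed

end
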